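(* Let $\mathbf V,\mathbf W$ be nonnegative arrays with $V_{1,1}=W_1=1$, $V_{n,k}>0$ for all $1\le k\le n$ and $W_s>0$ for all $s\ge1$, such that $\mathsf{Gibbs}_{[n]}(\mathbf V,\mathbf W)$ is a probability distribution for every $n$. Fix $n$, let $\Pi_{n+1}\sim\mathsf{Gibbs}_{[n+1]}(\mathbf V,\mathbf W)$, and let $\mathbf z=(z_1,\dots,z_{n+1})$ be its cluster membership vector, clusters labelled $1,2,\dots$ in order of first appearance. Given $\mathbf z_{1:n}=(z_1,\dots,z_n)$ with $k$ clusters of sizes $n_1,\dots,n_k$, one has $$\mathbb P(z_{n+1}=j\mid \mathbf z_{1:n})\propto\begin{cases} f(n_j), & j=1,\dots,k,\\ g(n,k), & j=k+1,\end{cases}$$ where $f(m)=W_{m+1}/W_m$ and $g(n,k)=V_{n+1,k+1}/V_{n+1,k}$. Moreover, $f$ is nondecreasing on $\mathbb N$ if and only if $\mathsf{Gibbs}_{[n]}(\mathbf V,\mathbf W)$ is balance-averse for every $n\ge1$, and $f$ is nonincreasing on $\mathbb N$ if and only if $\mathsf{Gibbs}_{[n]}(\mathbf V,\mathbf W)$ is balance-seeking for every $n\ge1$.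
   Context: For positive integers $k\le n$, $\mathcal I_n^k$ denotes the set of integer partitions of $n$ into $k$ parts, i.e. nonincreasing $k$-tuples $\mathbf n=(n_1,\dots,n_k)$ of positive integers with $\sum_j n_j=n$. For $\mathbf n,\mathbf n'\in\mathcal I_n^k$ write $\mathbf n\prec\mathbf n'$ if $\mathbf n\neq\mathbf n'$ and $\sum_{j=1}^J n_j\ge\sum_{j=1}^J n'_j$ for all $J=1,\dots,k$. A random partition $\Pi_n$ of $[n]$ is finitely exchangeable if its law is invariant under permutations of $[n]$; its EPPF is the symmetric function $p^{(n)}$ with $\mathbb P(\Pi_n=\{S_1,\dots,S_k\})=p^{(n)}(|S_1|,\dots,|S_k|)$. An EPPF is balance-averse if for all $k\le n$ and $\mathbf n,\mathbf n'\in\mathcal I_n^k$, $\mathbf n\prec\mathbf n'$ implies $p^{(n)}(\mathbf n)\ge p^{(n)}(\mathbf n')$; balance-seeking if it implies $p^{(n)}(\mathbf n)\le p^{(n)}(\mathbf n')$. $\Pi_n\sim\mathsf{Gibbs}_{[n]}(\mathbf V,\mathbf W)$ means $\Pi_n$ has EPPF $p^{(n)}(n_1,\dots,n_k)=V_{n,k}\prod_{j=1}^kW_{n_j}$. *)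

theory Defs
  imports Complex_Main "HOL-Library.Disjoint_Sets"
begin

definition set_partitions :: "nat \<Rightarrow> nat set set set" where
  "set_partitions n = {P. partition_on {1..n} P}"

definition gibbs :: "(nat \<Rightarrow> nat \<Rightarrow> real) \<Rightarrow> (nat \<Rightarrow> real) \<Rightarrow> nat \<Rightarrow> nat set set \<Rightarrow> real" where
  "gibbs V W n P = V n (card P) * (\<Prod>B\<in>P. W (card B))"

definition gibbs_prob :: "(nat \<Rightarrow> nat \<Rightarrow> real) \<Rightarrow> (nat \<Rightarrow> real) \<Rightarrow> nat \<Rightarrow> nat set set set \<Rightarrow> real" where
  "gibbs_prob V W n E = (\<Sum>P\<in>set_partitions n \<inter> E. gibbs V W n P)"

definition gibbs_cond :: "(nat \<Rightarrow> nat \<Rightarrow> real) \<Rightarrow> (nat \<Rightarrow> real) \<Rightarrow> nat \<Rightarrow> nat set set set \<Rightarrow> nat set set set \<Rightarrow> real" where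
  "gibbs_cond V W n A B = gibbs_prob V W n (A \<inter> B) / gibbs_prob V W n B"

(* Cluster membership vector: clusters labelled 1,2,... in order of first appearance
   (i.e. ordered by their least element). *)
definition block_of :: "nat set set \<Rightarrow> nat \<Rightarrow> nat set" where
  "block_of P i = (THE B. B \<in> P \<and> i \<in> B)"

definition zlab :: "nat set set \<Rightarrow> nat \<Rightarrow> nat" where
  "zlab P i = card {B' \<in> P. Min B' \<le> Min (block_of P i)}"

definition int_partitions :: "nat \<Rightarrow> nat \<Rightarrow> nat list set" where
  "int_partitions n k = {ns. length ns = k \<and> sorted_wrt (\<ge>) ns \<and> (\<forall>x\<in>set ns. 0 < x) \<and> sum_list ns = n}"

definition dom_prec :: "nat list \<Rightarrow> nat list \<Rightarrow> bool" where
  "dom_prec ns ns' \<longleftrightarrow> ns \<noteq> ns' \<and>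
     (\<forall>J\<in>{1..length ns}. sum_list (take J ns) \<ge> sum_list (take J ns'))"

(* p n ns = p^{(n)}(ns) : an EPPF as a function of block sizes *)
definition balance_averse :: "(nat \<Rightarrow> nat list \<Rightarrow> real) \<Rightarrow> nat \<Rightarrow> bool" where
  "balance_averse p n \<longleftrightarrow> (\<forall>k\<in>{1..n}. \<forall>ns\<in>int_partitions n k. \<forall>ns'\<in>int_partitions n k.
      dom_prec ns ns' \<longrightarrow> p n ns \<ge> p n ns')"

definition balance_seeking :: "(nat \<Rightarrow> nat list \<Rightarrow> real) \<Rightarrow> nat \<Rightarrow> bool" where
  "balance_seeking p n \<longleftrightarrow> (\<forall>k\<in>{1..n}. \<forall>ns\<in>int_partitions n k. \<forall>ns'\<in>int_partitions n k.
      dom_prec ns ns' \<longrightarrow> p n ns \<le> p n ns')"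

definition gibbs_eppf :: "(nat \<Rightarrow> nat \<Rightarrow> real) \<Rightarrow> (nat \<Rightarrow> real) \<Rightarrow> nat \<Rightarrow> nat list \<Rightarrow> real" where
  "gibbs_eppf V W n ns = V n (length ns) * prod_list (map W ns)"

end

theory Submission
  imports Defs
begin


lemma prod_list_nth: "prod_list (map (W::nat\<Rightarrow>real) xs) = (\<Prod>i<length xs. W (xs!i))"
  by (induction xs) (simp_all del: prod.lessThan_Suc add: prod.lessThan_Suc_shift)

lemma sum_take_nth: "J \<le> length xs \<Longrightarrow> sum_list (take J xs) = (\<Sum>i<J. xs!i)"
  by (simp add: sum_list_sum_nth atLeast0LessThan min_absorb2)

lemma hinge:
  fixes x y :: "nat \<Rightarrow> nat"
  assumes dec: "\<And>i j. i \<le> j \<Longrightarrow> j < k \<Longrightarrow> y j \<le> y i"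
    and dom: "\<And>J. J \<le> k \<Longrightarrow> (\<Sum>i<J. y i) \<le> (\<Sum>i<J. x i)"
  shows "(\<Sum>i<k. y i - s) \<le> (\<Sum>i<k. x i - s)"
proof -
  obtain J where J: "J \<le> k" "\<And>i. i < k \<Longrightarrow> (s < y i \<longleftrightarrow> i < J)"
  proof (cases "\<forall>i<k. s < y i")
    case True then show ?thesis using that[of k] by auto
  next
    case False
    define J where "J = (LEAST i. i < k \<and> y i \<le> s)"
    from False obtain i0 where i0: "i0 < k \<and> y i0 \<le> s" by (auto simp: not_less)
    have JJ: "J < k \<and> y J \<le> s" unfolding J_def by (rule LeastI[of _ i0]) (rule i0)
    have "i < k \<Longrightarrow> (s < y i \<longleftrightarrow> i < J)" for i
    proof
      assume "i < k" "s < y i"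
      show "i < J"
      proof (rule ccontr)
        assume "\<not> i < J"
        then have "y i \<le> y J" using dec \<open>i<k\<close> by simp
        then show False using JJ \<open>s < y i\<close> by simp
      qed
    next
      assume "i < k" "i < J"
      then show "s < y i" using not_less_Least[of i "\<lambda>i. i < k \<and> y i \<le> s"] unfolding J_def by auto
    qed
    then show ?thesis using that[of J] JJ by auto
  qed
  have "int (\<Sum>i<k. y i - s) = (\<Sum>i<k. int (y i - s))" by simp
  also have "\<dots> = (\<Sum>i<J. int (y i - s))"
    by (rule sum.mono_neutral_right) (use J in auto, metis J(2) not_less)
  also have "\<dots> = (\<Sum>i<J. int (y i) - int s)"
    by (rule sum.cong) (use J in \<open>auto simp: of_nat_diff less_imp_le\<close>)
  also have "\<dots> = int (\<Sum>i<J. y i) - int J * int s" by (simp add: sum_subtractf)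
  also have "\<dots> \<le> int (\<Sum>i<J. x i) - int J * int s" using dom[OF J(1)] by (simp only: of_nat_le_iff diff_right_mono)
  also have "\<dots> = (\<Sum>i<J. int (x i) - int s)" by (simp add: sum_subtractf)
  also have "\<dots> \<le> (\<Sum>i<J. int (x i - s))" by (rule sum_mono) auto
  also have "\<dots> \<le> (\<Sum>i<k. int (x i - s))"
    by (rule sum_mono2) (use J in auto)
  also have "\<dots> = int (\<Sum>i<k. x i - s)" by simp
  finally show ?thesis by linarith
qed

lemma hinge_repr:
  fixes \<phi> :: "nat \<Rightarrow> real"
  defines "d \<equiv> \<lambda>s. \<phi> (Suc s) - \<phi> s"
  assumes "1 \<le> m"
  shows "\<phi> m = \<phi> 1 + real (m - 1) * d 1 + (\<Sum>t=1..<m. (d (Suc t) - d t) * real (m - 1 - t))"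
  using assms(2)
proof (induction m rule: dec_induct)
  case base then show ?case by simp
next
  case (step m)
  have tel: "(\<Sum>t=1..<m. d (Suc t) - d t) = d m - d 1" using step(1) by (rule sum_Suc_diff')
  have "(\<Sum>t=1..<Suc m. (d (Suc t) - d t) * real (Suc m - 1 - t))
      = (\<Sum>t=1..<m. (d (Suc t) - d t) * real (m - 1 - t) + (d (Suc t) - d t))"
    using step(1) by (auto intro!: sum.cong simp: Suc_diff_le algebra_simps of_nat_diff)
  also have "\<dots> = (\<Sum>t=1..<m. (d (Suc t) - d t) * real (m - 1 - t)) + (d m - d 1)"
    using tel by (simp add: sum.distrib)
  finally show ?case using step(3) step(1) by (simp add: d_def of_nat_diff algebra_simps)
qed

lemma hinge_repr_N:
  fixes \<phi> :: "nat \<Rightarrow> real"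
  defines "d \<equiv> \<lambda>s. \<phi> (Suc s) - \<phi> s"
  assumes "1 \<le> m" "m \<le> N"
  shows "\<phi> m = \<phi> 1 + real (m - 1) * d 1 + (\<Sum>t=1..<N. (d (Suc t) - d t) * real (m - 1 - t))"
proof -
  have "(\<Sum>t=1..<N. (d (Suc t) - d t) * real (m - 1 - t)) = (\<Sum>t=1..<m. (d (Suc t) - d t) * real (m - 1 - t))"
    by (rule sum.mono_neutral_right) (use assms in auto)
  then show ?thesis using hinge_repr[of m \<phi>] assms by (simp add: d_def)
qed

lemma major:
  fixes x y :: "nat \<Rightarrow> nat" and \<phi> :: "nat \<Rightarrow> real"
  defines "d \<equiv> \<lambda>s. \<phi> (Suc s) - \<phi> s"
  assumes pos: "\<And>i. i < k \<Longrightarrow> 1 \<le> x i \<and> 1 \<le> y i"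
    and dec: "\<And>i j. i \<le> j \<Longrightarrow> j < k \<Longrightarrow> y j \<le> y i"
    and dom: "\<And>J. J \<le> k \<Longrightarrow> (\<Sum>i<J. y i) \<le> (\<Sum>i<J. x i)"
    and tot: "(\<Sum>i<k. y i) = (\<Sum>i<k. x i)"
    and conv: "\<And>t. 1 \<le> t \<Longrightarrow> d t \<le> d (Suc t)"
  shows "(\<Sum>i<k. \<phi> (y i)) \<le> (\<Sum>i<k. \<phi> (x i))"
proof -
  define N where "N = Suc (\<Sum>i<k. x i + y i)"
  have bnd: "z i \<le> N" if "i < k" "z = x \<or> z = y" for z i
  proof -
    have "x i + y i \<le> (\<Sum>i<k. x i + y i)" by (rule member_le_sum) (use that in auto)
    then show ?thesis using that unfolding N_def by auto
  qed
  define e where "e = (\<lambda>t. d (Suc t) - d t)"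
  have F: "(\<Sum>i<k. \<phi> (z i)) = real k * \<phi> 1 + real (\<Sum>i<k. z i - 1) * d 1
     + (\<Sum>t=1..<N. e t * real (\<Sum>i<k. z i - Suc t))" if "z = x \<or> z = y" for z
  proof -
    have "(\<Sum>i<k. \<phi> (z i)) = (\<Sum>i<k. \<phi> 1 + real (z i - 1) * d 1 + (\<Sum>t=1..<N. e t * real (z i - 1 - t)))"
      by (rule sum.cong[OF refl], unfold e_def d_def, rule hinge_repr_N) (use pos bnd that in auto)
    also have "\<dots> = real k * \<phi> 1 + real (\<Sum>i<k. z i - 1) * d 1
     + (\<Sum>t=1..<N. e t * real (\<Sum>i<k. z i - Suc t))"
      by (simp add: sum.distrib sum_distrib_left sum_distrib_right, rule sum.swap)
    finally show ?thesis .
  qed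
  have eq1: "(\<Sum>i<k. y i - 1) = (\<Sum>i<k. x i - 1)"
  proof -
    have "(\<Sum>i<k. z i - 1) + k = (\<Sum>i<k. z i)" if "z = x \<or> z = y" for z
    proof -
      have "(\<Sum>i<k. z i - 1) + k = (\<Sum>i<k. (z i - 1) + 1)" by (simp only: sum.distrib) simp
      also have "\<dots> = (\<Sum>i<k. z i)" proof (rule sum.cong)
        fix i assume "i \<in> {..<k}"
        then have "1 \<le> z i" using pos that by auto
        then show "z i - 1 + 1 = z i" by simp
      qed simp
      finally show ?thesis .
    qed
    then show ?thesis using tot by (metis add_right_imp_eq)
  qed
  have "(\<Sum>t=1..<N. e t * real (\<Sum>i<k. y i - Suc t)) \<le> (\<Sum>t=1..<N. e t * real (\<Sum>i<k. x i - Suc t))"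
  proof (rule sum_mono)
    fix t assume "t \<in> {1..<N}"
    then have "0 \<le> e t" using conv[of t] by (auto simp: e_def)
    moreover have "(\<Sum>i<k. y i - Suc t) \<le> (\<Sum>i<k. x i - Suc t)" by (rule hinge) (use dec dom in auto)
    ultimately show "e t * real (\<Sum>i<k. y i - Suc t) \<le> e t * real (\<Sum>i<k. x i - Suc t)"
      by (intro mult_left_mono) (simp_all only: of_nat_le_iff)
  qed
  then show ?thesis using F[of x] F[of y] eq1 by (simp del: of_nat_sum)
qed

lemma major_list:
  fixes \<phi> :: "nat \<Rightarrow> real"
  assumes ns: "ns \<in> int_partitions n k" and ns': "ns' \<in> int_partitions n k"
    and dp: "dom_prec ns ns'"
    and conv: "\<And>t. 1 \<le> t \<Longrightarrow> \<phi> (Suc t) - \<phi> t \<le> \<phi> (Suc (Suc t)) - \<phi> (Suc t)"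
  shows "(\<Sum>i<k. \<phi> (ns'!i)) \<le> (\<Sum>i<k. \<phi> (ns!i))"
proof (rule major)
  from ns have L: "length ns = k" and S: "sorted_wrt (\<ge>) ns" and P: "\<forall>x\<in>set ns. 0 < x" and Su: "sum_list ns = n"
    by (auto simp: int_partitions_def)
  from ns' have L': "length ns' = k" and S': "sorted_wrt (\<ge>) ns'" and P': "\<forall>x\<in>set ns'. 0 < x" and Su': "sum_list ns' = n"
    by (auto simp: int_partitions_def)
  show "1 \<le> ns ! i \<and> 1 \<le> ns' ! i" if "i < k" for i
    using P P' that L L' by (auto simp: Suc_le_eq)
  show "ns' ! j \<le> ns' ! i" if "i \<le> j" "j < k" for i j
  proof (cases "i = j")
    case False then show ?thesis using sorted_wrt_nth_less[OF S', of i j] that L' by auto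
  qed simp
  show "(\<Sum>i<J. ns' ! i) \<le> (\<Sum>i<J. ns ! i)" if "J \<le> k" for J
  proof (cases "J = 0")
    case False
    then have "sum_list (take J ns') \<le> sum_list (take J ns)" using dp that L
      by (auto simp: dom_prec_def)
    then show ?thesis using sum_take_nth[of J ns] sum_take_nth[of J ns'] that L L' by simp
  qed simp
  show "(\<Sum>i<k. ns' ! i) = (\<Sum>i<k. ns ! i)"
    using sum_take_nth[of k ns] sum_take_nth[of k ns'] L L' Su Su' by simp
  show "\<And>t. 1 \<le> t \<Longrightarrow> (\<lambda>s. \<phi> (Suc s) - \<phi> s) t \<le> (\<lambda>s. \<phi> (Suc s) - \<phi> s) (Suc t)"
    using conv by simp
qed

lemma prodW_ln:
  assumes Wp: "\<And>s. 1 \<le> s \<Longrightarrow> 0 < (W::nat\<Rightarrow>real) s" and ns: "ns \<in> int_partitions n k"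
  shows "prod_list (map W ns) = exp (\<Sum>i<k. ln (W (ns!i)))"
    "prod_list (map W ns) > 0"
proof -
  from ns have L: "length ns = k" and P: "\<forall>x\<in>set ns. 0 < x" by (auto simp: int_partitions_def)
  have pos: "\<And>i. i < k \<Longrightarrow> 0 < W (ns!i)" using Wp P L by (auto simp: Suc_le_eq)
  have "prod_list (map W ns) = (\<Prod>i<k. W (ns!i))" using prod_list_nth L by simp
  also have "\<dots> = (\<Prod>i<k. exp (ln (W (ns!i))))" by (rule prod.cong) (use pos in auto)
  also have "\<dots> = exp (\<Sum>i<k. ln (W (ns!i)))" by (simp add: exp_sum)
  finally show "prod_list (map W ns) = exp (\<Sum>i<k. ln (W (ns!i)))" .
  then show "prod_list (map W ns) > 0" by simp
qed

lemma averse_dir: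
  fixes V :: "nat \<Rightarrow> nat \<Rightarrow> real" and W :: "nat \<Rightarrow> real"
  assumes Vn: "\<forall>n k. 0 \<le> V n k" and Wp: "\<And>s. 1 \<le> s \<Longrightarrow> 0 < W s"
    and fm: "\<forall>m\<ge>1. W (m+1) / W m \<le> W (m+1+1) / W (m+1)"
  shows "balance_averse (gibbs_eppf V W) n"
  unfolding balance_averse_def
proof (intro ballI impI)
  fix k ns ns' assume ns: "ns \<in> int_partitions n k" and ns': "ns' \<in> int_partitions n k" and dp: "dom_prec ns ns'"
  have L: "length ns = k" "length ns' = k" using ns ns' by (auto simp: int_partitions_def)
  define \<phi> where "\<phi> = (\<lambda>s. ln (W s))"
  have "(\<Sum>i<k. \<phi> (ns'!i)) \<le> (\<Sum>i<k. \<phi> (ns!i))"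
  proof (rule major_list[OF ns ns' dp])
    fix t :: nat assume t: "1 \<le> t"
    have p: "0 < W t" "0 < W (Suc t)" "0 < W (Suc (Suc t))" using Wp t by auto
    have "ln (W (Suc t) / W t) \<le> ln (W (Suc (Suc t)) / W (Suc t))"
      using fm t p by simp
    then show "\<phi> (Suc t) - \<phi> t \<le> \<phi> (Suc (Suc t)) - \<phi> (Suc t)"
      using p by (simp add: \<phi>_def ln_div)
  qed
  then have "prod_list (map W ns') \<le> prod_list (map W ns)"
    using prodW_ln[OF Wp ns] prodW_ln[OF Wp ns'] by (simp add: \<phi>_def)
  then show "gibbs_eppf V W n ns' \<le> gibbs_eppf V W n ns"
    using L Vn by (simp add: gibbs_eppf_def mult_left_mono)
qed

lemma seeking_dir:
  fixes V :: "nat \<Rightarrow> nat \<Rightarrow> real" and W :: "nat \<Rightarrow> real"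
  assumes Vn: "\<forall>n k. 0 \<le> V n k" and Wp: "\<And>s. 1 \<le> s \<Longrightarrow> 0 < W s"
    and fm: "\<forall>m\<ge>1. W (m+1+1) / W (m+1) \<le> W (m+1) / W m"
  shows "balance_seeking (gibbs_eppf V W) n"
  unfolding balance_seeking_def
proof (intro ballI impI)
  fix k ns ns' assume ns: "ns \<in> int_partitions n k" and ns': "ns' \<in> int_partitions n k" and dp: "dom_prec ns ns'"
  have L: "length ns = k" "length ns' = k" using ns ns' by (auto simp: int_partitions_def)
  define \<phi> where "\<phi> = (\<lambda>s. - ln (W s))"
  have "(\<Sum>i<k. \<phi> (ns'!i)) \<le> (\<Sum>i<k. \<phi> (ns!i))"
  proof (rule major_list[OF ns ns' dp])
    fix t :: nat assume t: "1 \<le> t"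
    have p: "0 < W t" "0 < W (Suc t)" "0 < W (Suc (Suc t))" using Wp t by auto
    have "ln (W (Suc (Suc t)) / W (Suc t)) \<le> ln (W (Suc t) / W t)"
      using fm t p by simp
    then show "\<phi> (Suc t) - \<phi> t \<le> \<phi> (Suc (Suc t)) - \<phi> (Suc t)"
      using p by (simp add: \<phi>_def ln_div)
  qed
  then have "prod_list (map W ns) \<le> prod_list (map W ns')"
    using prodW_ln[OF Wp ns] prodW_ln[OF Wp ns'] by (simp add: \<phi>_def sum_negf)
  then show "gibbs_eppf V W n ns \<le> gibbs_eppf V W n ns'"
    using L Vn by (simp add: gibbs_eppf_def mult_left_mono)
qed

lemma two_parts:
  assumes "1 \<le> m"
  shows "[m+2, m] \<in> int_partitions (2*m+2) 2" "[m+1, m+1] \<in> int_partitions (2*m+2) 2"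
    "dom_prec [m+2, m] [m+1, m+1]"
proof -
  have e: "{1..length [m+2,m]} = {1,2}" by auto
  show "[m+2, m] \<in> int_partitions (2*m+2) 2" "[m+1, m+1] \<in> int_partitions (2*m+2) 2"
    using assms by (auto simp: int_partitions_def)
  show "dom_prec [m+2, m] [m+1, m+1]" unfolding dom_prec_def e by auto
qed

lemma averse_conv:
  fixes V :: "nat \<Rightarrow> nat \<Rightarrow> real" and W :: "nat \<Rightarrow> real"
  assumes Vp: "\<forall>n k. 1 \<le> k \<and> k \<le> n \<longrightarrow> 0 < V n k" and Wp: "\<And>s. 1 \<le> s \<Longrightarrow> 0 < W s"
    and ba: "\<forall>n\<ge>1. balance_averse (gibbs_eppf V W) n" and m: "1 \<le> m"
  shows "W (m+1) / W m \<le> W (m+1+1) / W (m+1)"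
proof -
  have "gibbs_eppf V W (2*m+2) [m+1, m+1] \<le> gibbs_eppf V W (2*m+2) [m+2, m]"
    using ba[rule_format, of "2*m+2", unfolded balance_averse_def, rule_format, of 2, OF _ _ two_parts[OF m]] m by auto
  moreover have V: "0 < V (2*m+2) 2" using Vp m by auto
  ultimately have "W (m+1) * W (m+1) \<le> W (m+2) * W m"
    by (simp add: gibbs_eppf_def numeral_2_eq_2 mult_le_cancel_left_pos)
  moreover have "0 < W m" "0 < W (m+1)" using Wp m by auto
  ultimately show ?thesis by (simp add: divide_simps mult.commute)
qed

lemma seeking_conv:
  fixes V :: "nat \<Rightarrow> nat \<Rightarrow> real" and W :: "nat \<Rightarrow> real"
  assumes Vp: "\<forall>n k. 1 \<le> k \<and> k \<le> n \<longrightarrow> 0 < V n k" and Wp: "\<And>s. 1 \<le> s \<Longrightarrow> 0 < W s"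
    and ba: "\<forall>n\<ge>1. balance_seeking (gibbs_eppf V W) n" and m: "1 \<le> m"
  shows "W (m+1+1) / W (m+1) \<le> W (m+1) / W m"
proof -
  have "gibbs_eppf V W (2*m+2) [m+2, m] \<le> gibbs_eppf V W (2*m+2) [m+1, m+1]"
    using ba[rule_format, of "2*m+2", unfolded balance_seeking_def, rule_format, of 2, OF _ _ two_parts[OF m]] m by auto
  moreover have V: "0 < V (2*m+2) 2" using Vp m by auto
  ultimately have "W (m+2) * W m \<le> W (m+1) * W (m+1)"
    by (simp add: gibbs_eppf_def numeral_2_eq_2 mult_le_cancel_left_pos)
  moreover have "0 < W m" "0 < W (m+1)" using Wp m by auto
  ultimately show ?thesis by (simp add: divide_simps mult.commute)
qed



definition rk :: "nat set \<Rightarrow> nat \<Rightarrow> nat" where "rk A a = card {a'\<in>A. a' \<le> a}"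

lemma rk_mono_strict: "finite A \<Longrightarrow> b \<in> A \<Longrightarrow> a < b \<Longrightarrow> rk A a < rk A b"
proof -
  assume a: "finite A" "b \<in> A" "a < b"
  have "{a'\<in>A. a' \<le> a} \<subset> {a'\<in>A. a' \<le> b}"
  proof
    show "{a'\<in>A. a' \<le> a} \<noteq> {a'\<in>A. a' \<le> b}"
    proof
      assume "{a'\<in>A. a' \<le> a} = {a'\<in>A. a' \<le> b}"
      then have "b \<in> {a'\<in>A. a' \<le> a}" using a by auto
      then show False using a by simp
    qed
  qed (use a in auto)
  then show ?thesis unfolding rk_def using a(1) by (intro psubset_card_mono) auto
qed

lemma rk_inj: "finite A \<Longrightarrow> a \<in> A \<Longrightarrow> b \<in> A \<Longrightarrow> rk A a = rk A b \<Longrightarrow> a = b"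
  by (metis less_irrefl linorder_neqE_nat rk_mono_strict)

lemma rk_range: "finite A \<Longrightarrow> a \<in> A \<Longrightarrow> rk A a \<in> {1..card A}"
proof -
  assume "finite A" "a \<in> A"
  then have "{a'\<in>A. a' \<le> a} \<noteq> {}" "finite {a'\<in>A. a' \<le> a}" by auto
  then have "1 \<le> rk A a" unfolding rk_def by (simp add: Suc_le_eq card_gt_0_iff)
  moreover have "rk A a \<le> card A" unfolding rk_def using \<open>finite A\<close> by (intro card_mono) auto
  ultimately show ?thesis by auto
qed

lemma rk_surj: "finite A \<Longrightarrow> rk A ` A = {1..card A}"
proof -
  assume f: "finite A"
  have inj: "inj_on (rk A) A" using rk_inj[OF f] by (auto simp: inj_on_def)
  have "rk A ` A \<subseteq> {1..card A}" using rk_range[OF f] by auto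
  moreover have "card (rk A ` A) = card {1..card A}" using card_image[OF inj] by simp
  ultimately show ?thesis by (intro card_subset_eq) auto
qed

lemma rk_insert_big: "finite A \<Longrightarrow> a < b \<Longrightarrow> rk (insert b A) a = rk A a"
  unfolding rk_def by (rule arg_cong[where f=card]) auto

lemma rk_insert_max: "finite A \<Longrightarrow> \<forall>a\<in>A. a < b \<Longrightarrow> rk (insert b A) b = card A + 1"
proof -
  assume "finite A" "\<forall>a\<in>A. a < b"
  then have "{a'\<in>insert b A. a' \<le> b} = insert b A" by auto
  moreover have "b \<notin> A" using \<open>\<forall>a\<in>A. a < b\<close> by auto
  ultimately show ?thesis unfolding rk_def using \<open>finite A\<close> by simp
qed

locale part =
  fixes S :: "nat set" and P :: "nat set set"
  assumes fin: "finite S" and po: "partition_on S P"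
begin

lemma finP: "finite P" using finite_elements[OF fin po] .

lemma blocks: "B \<in> P \<Longrightarrow> B \<noteq> {} \<and> finite B \<and> B \<subseteq> S"
  using po fin by (auto simp: partition_on_def intro: finite_subset)

lemma disj: "B \<in> P \<Longrightarrow> B' \<in> P \<Longrightarrow> x \<in> B \<Longrightarrow> x \<in> B' \<Longrightarrow> B = B'"
  using po unfolding partition_on_def disjoint_def by blast

lemma block_eq: "B \<in> P \<Longrightarrow> i \<in> B \<Longrightarrow> block_of P i = B"
  unfolding block_of_def by (rule the_equality) (auto dest: disj)

lemma block_mem: "i \<in> S \<Longrightarrow> block_of P i \<in> P \<and> i \<in> block_of P i"
proof -
  assume "i \<in> S"
  then obtain B where "B \<in> P" "i \<in> B" using po by (auto simp: partition_on_def)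
  then show ?thesis using block_eq by simp
qed

lemma Min_mem: "B \<in> P \<Longrightarrow> Min B \<in> B"
  using blocks by auto

lemma Min_inj: "inj_on Min P"
  by (rule inj_onI) (metis Min_mem disj)

lemma zlab_rk: "zlab P i = rk (Min ` P) (Min (block_of P i))"
proof -
  have "Min ` {B'\<in>P. Min B' \<le> Min (block_of P i)} = {a\<in>Min ` P. a \<le> Min (block_of P i)}" by auto
  moreover have "card (Min ` {B'\<in>P. Min B' \<le> Min (block_of P i)}) = card {B'\<in>P. Min B' \<le> Min (block_of P i)}"
    by (rule card_image) (rule inj_on_subset[OF Min_inj], auto)
  ultimately show ?thesis unfolding zlab_def rk_def by simp
qed

lemma zlab_eq_iff: "i \<in> S \<Longrightarrow> i' \<in> S \<Longrightarrow> zlab P i = zlab P i' \<longleftrightarrow> block_of P i = block_of P i'"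
proof
  assume i: "i \<in> S" "i' \<in> S" and z: "zlab P i = zlab P i'"
  then have "Min (block_of P i) = Min (block_of P i')"
    using rk_inj[of "Min ` P"] finP block_mem zlab_rk by auto
  then show "block_of P i = block_of P i'" using Min_inj block_mem i by (auto dest: inj_onD)
qed (simp add: zlab_def)

lemma P_eq: "P = (\<lambda>i. {i'\<in>S. zlab P i' = zlab P i}) ` S"
proof -
  have "P = block_of P ` S"
  proof
    show "P \<subseteq> block_of P ` S"
    proof
      fix B assume "B \<in> P"
      then obtain i where "i \<in> B" using blocks by blast
      then show "B \<in> block_of P ` S" using block_eq \<open>B\<in>P\<close> blocks by blast
    qed
  qed (use block_mem in auto)
  also have "\<dots> = (\<lambda>i. {i'\<in>S. zlab P i' = zlab P i}) ` S"
  proof (rule image_cong[OF refl])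
    fix i assume i: "i \<in> S"
    show "block_of P i = {i'\<in>S. zlab P i' = zlab P i}"
    proof safe
      fix x assume x: "x \<in> block_of P i"
      then show "x \<in> S" using blocks block_mem i by blast
      then show "zlab P x = zlab P i" using zlab_eq_iff i block_eq block_mem x by metis
    next
      fix x assume "x \<in> S" "zlab P x = zlab P i"
      then show "x \<in> block_of P i" using zlab_eq_iff i block_mem by metis
    qed
  qed
  finally show ?thesis .
qed
end

lemma part_unique:
  assumes "finite S" "partition_on S P" "partition_on S Q" "\<forall>i\<in>S. zlab P i = zlab Q i"
  shows "P = Q"
proof -
  interpret p: part S P using assms by unfold_locales
  interpret q: part S Q using assms by unfold_locales
  have "(\<lambda>i. {i'\<in>S. zlab P i' = zlab P i}) ` S = (\<lambda>i. {i'\<in>S. zlab Q i' = zlab Q i}) ` S"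
    using assms(4) by (intro image_cong) auto
  then show ?thesis using p.P_eq q.P_eq by simp
qed

lemma cond_part:
  fixes V :: "nat \<Rightarrow> nat \<Rightarrow> real" and W :: "nat \<Rightarrow> real"
  assumes V_nonneg: "\<forall>n k. 0 \<le> V n k"
    and W_nonneg: "\<forall>s. 0 \<le> W s"
    and W1: "W 1 = 1"
    and V_pos: "\<forall>n k. 1 \<le> k \<and> k \<le> n \<longrightarrow> 0 < V n k"
    and W_pos: "\<forall>s. 1 \<le> s \<longrightarrow> 0 < W s"
    and n: "1 \<le> n" and pi: "\<pi> \<in> set_partitions n"
  shows "\<exists>c>0. \<forall>j\<in>{1..card \<pi>+1}.
     gibbs_cond V W (n + 1) {P. zlab P (n + 1) = j} {P. \<forall>i\<in>{1..n}. zlab P i = zlab \<pi> i}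
       = c * (if j \<le> card \<pi> then W (card {i\<in>{1..n}. zlab \<pi> i = j} + 1) / W (card {i\<in>{1..n}. zlab \<pi> i = j})
              else V (n + 1) (card \<pi> + 1) / V (n + 1) (card \<pi>))"
proof -
  define k where "k = card \<pi>"
  define C where "C = {P. \<forall>i\<in>{1..n}. zlab P i = zlab \<pi> i}"
  have po: "partition_on {1..n} \<pi>" using pi by (simp add: set_partitions_def)
  interpret p: part "{1..n}" \<pi> using po by unfold_locales simp
  have cardM: "card (Min ` \<pi>) = k" unfolding k_def by (rule card_image[OF p.Min_inj])
  have Msub: "Min ` \<pi> \<subseteq> {1..n}" using p.Min_mem p.blocks by blast
  have finM: "finite (Min ` \<pi>)" using p.finP by simp
  have k_le: "k \<le> n" using card_mono[OF _ Msub] cardM by simp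
  have k_ge: "1 \<le> k"
  proof -
    have "\<pi> \<noteq> {}" using po n by (auto simp: partition_on_def)
    then show ?thesis unfolding k_def using p.finP by (simp add: Suc_le_eq card_gt_0_iff)
  qed
  have nb: "n + 1 \<notin> B" if "B \<in> \<pi>" for B using p.blocks[OF that] by auto
  have fin_sp: "finite (set_partitions (n+1))" unfolding set_partitions_def
    by (rule finitely_many_partition_on) simp
  have gnn: "0 \<le> gibbs V W m P" for m P
    unfolding gibbs_def using V_nonneg W_nonneg by (simp add: prod_nonneg)
  define PP where "PP = (\<Prod>B\<in>\<pi>. W (card B))"
  have PPpos: "0 < PP" unfolding PP_def
    using W_pos p.blocks by (intro prod_pos) (auto simp: Suc_le_eq card_gt_0_iff)
  define Pn where "Pn = insert {n+1} \<pi>"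
  have Pn_po: "partition_on {1..n+1} Pn"
  proof -
    have "disjnt {n+1} (\<Union>\<pi>)" using nb by (auto simp: disjnt_def)
    moreover have "{1..n+1} - {n+1} = {1..n}" by auto
    ultimately show ?thesis unfolding Pn_def using po by (subst partition_on_insert) auto
  qed
  interpret pn: part "{1..n+1}" Pn using Pn_po by unfold_locales simp
  have MPn: "Min ` Pn = insert (n+1) (Min ` \<pi>)" unfolding Pn_def by simp
  have Pn_z: "zlab Pn i = zlab \<pi> i" if i: "i \<in> {1..n}" for i
  proof -
    have bb: "block_of Pn i = block_of \<pi> i"
      using p.block_mem[OF i] by (intro pn.block_eq) (auto simp: Pn_def)
    have "Min (block_of \<pi> i) \<le> n" using Msub p.block_mem[OF i] by auto
    then show ?thesis using pn.zlab_rk p.zlab_rk bb MPn rk_insert_big[OF finM, of "Min (block_of \<pi> i)" "n+1"]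
      by simp
  qed
  have Pn_zn: "zlab Pn (n+1) = k+1"
  proof -
    have "block_of Pn (n+1) = {n+1}" by (rule pn.block_eq) (auto simp: Pn_def)
    moreover have "\<forall>a\<in>Min ` \<pi>. a < n+1" using Msub by auto
    ultimately show ?thesis using pn.zlab_rk MPn rk_insert_max[OF finM] cardM by simp
  qed
  have nPn: "{n+1} \<notin> \<pi>" using nb by blast
  have Pn_card: "card Pn = k + 1" unfolding Pn_def k_def using nPn p.finP by simp
  have Pn_g: "gibbs V W (n+1) Pn = V (n+1) (k+1) * PP"
    unfolding gibbs_def Pn_card unfolding Pn_def PP_def using nPn p.finP W1 by simp
  have Pn_in: "Pn \<in> set_partitions (n+1) \<inter> C"
    using Pn_po Pn_z by (auto simp: set_partitions_def C_def)
  have uniq: "set_partitions (n+1) \<inter> ({P. zlab P (n+1) = j} \<inter> C) = {Q}"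
    if Q: "Q \<in> set_partitions (n+1) \<inter> C" "zlab Q (n+1) = j" for Q j
  proof
    show "{Q} \<subseteq> set_partitions (n+1) \<inter> ({P. zlab P (n+1) = j} \<inter> C)" using that by auto
  next
    show "set_partitions (n+1) \<inter> ({P. zlab P (n+1) = j} \<inter> C) \<subseteq> {Q}"
    proof
    fix P assume "P \<in> set_partitions (n+1) \<inter> ({P. zlab P (n+1) = j} \<inter> C)"
    then have P: "P \<in> set_partitions (n+1)" "P \<in> C" "zlab P (n+1) = j" by auto
    have "\<forall>i\<in>{1..n+1}. zlab P i = zlab Q i"
    proof
      fix i assume "i \<in> {1..n+1}"
      then have "i \<in> {1..n} \<or> i = n+1" by auto
      then show "zlab P i = zlab Q i" using P Q by (auto simp: C_def)
    qed
    then have "P = Q" using P Q by (intro part_unique[of "{1..n+1}"]) (auto simp: set_partitions_def)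
    then show "P \<in> {Q}" by simp
    qed
  qed
  define G where "G = gibbs_prob V W (n+1) C"
  have Gpos: "0 < G"
  proof -
    have "gibbs V W (n+1) Pn \<le> G" unfolding G_def gibbs_prob_def
      by (rule member_le_sum) (use Pn_in fin_sp gnn in auto)
    moreover have "0 < V (n+1) (k+1)" using V_pos k_le by auto
    ultimately show ?thesis using Pn_g PPpos by (smt (verit) mult_pos_pos)
  qed
  have Vk: "0 < V (n+1) k" using V_pos k_le k_ge by auto
  define c where "c = V (n+1) k * PP / G"
  have cpos: "0 < c" unfolding c_def using Vk PPpos Gpos by simp
  have cond: "gibbs_cond V W (n+1) {P. zlab P (n + 1) = j} C = gibbs V W (n+1) Q / G"
    if "Q \<in> set_partitions (n+1) \<inter> C" "zlab Q (n+1) = j" for Q j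
    unfolding gibbs_cond_def G_def gibbs_prob_def uniq[OF that] by simp
  show ?thesis
  proof (intro exI[of _ c] conjI cpos ballI, fold k_def C_def)
    fix j assume j: "j \<in> {1..k+1}"
    show "gibbs_cond V W (n + 1) {P. zlab P (n + 1) = j} C =
         c * (if j \<le> k then W (card {i \<in> {1..n}. zlab \<pi> i = j} + 1) / W (card {i \<in> {1..n}. zlab \<pi> i = j})
              else V (n + 1) (k + 1) / V (n + 1) k)"
    proof (cases "j \<le> k")
      case False
      then have "j = k+1" using j by auto
      then show ?thesis using cond[OF Pn_in] Pn_zn Pn_g False Vk
        unfolding c_def by (simp add: field_simps)
    next
      case True
      then have "j \<in> rk (Min ` \<pi>) ` Min ` \<pi>" using rk_surj[OF finM] cardM j by auto
      then obtain B where B: "B \<in> \<pi>" "rk (Min ` \<pi>) (Min B) = j" by auto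
      have Bset: "{i \<in> {1..n}. zlab \<pi> i = j} = B"
      proof (rule set_eqI, rule iffI)
        fix i assume "i \<in> {i \<in> {1..n}. zlab \<pi> i = j}"
        then have i: "i \<in> {1..n}" "zlab \<pi> i = j" by auto
        then have "Min (block_of \<pi> i) = Min B"
          using rk_inj[OF finM] p.block_mem[OF i(1)] B p.zlab_rk by auto
        then have "block_of \<pi> i = B" using p.Min_inj p.block_mem[OF i(1)] B(1) by (auto dest: inj_onD)
        then show "i \<in> B" using p.block_mem[OF i(1)] by simp
      next
        fix i assume "i \<in> B"
        then have "i \<in> {1..n}" using p.blocks[OF B(1)] by blast
        moreover have "zlab \<pi> i = j" using p.zlab_rk p.block_eq[OF B(1) \<open>i\<in>B\<close>] B by simp
        ultimately show "i \<in> {i \<in> {1..n}. zlab \<pi> i = j}" by simp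
      qed
      define Pj where "Pj = insert (insert (n+1) B) (\<pi> - {B})"
      have Bne: "B \<noteq> {}" "finite B" "B \<subseteq> {1..n}" using p.blocks B by auto
      have MinB: "Min (insert (n+1) B) = Min B"
        using Bne by (simp add: Min_insert) (use Min_in Bne in fastforce)
      have Pj_po: "partition_on {1..n+1} Pj"
      proof (rule partition_onI)
        have U: "\<Union>\<pi> = {1..n}" using po by (simp add: partition_on_def)
        have "\<Union>Pj = insert (n+1) (\<Union>\<pi>)" unfolding Pj_def using B(1) by blast
        moreover have "{1..n+1} = insert (n+1) {1..n}" by auto
        ultimately show "\<Union>Pj = {1..n+1}" using U by simp
        show "{} \<notin> Pj" unfolding Pj_def using po by (auto simp: partition_on_def)
        have D: "p \<inter> q = {}" if "p \<in> \<pi>" "q \<in> \<pi>" "p \<noteq> q" for p q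
          using p.disj that by blast
        have D2: "insert (n+1) B \<inter> q = {}" if "q \<in> \<pi>" "q \<noteq> B" for q
          using D[OF B(1) that(1)] that nb[OF that(1)] by auto
        fix p q assume pq: "p \<in> Pj" "q \<in> Pj" "p \<noteq> q"
        then consider "p = insert (n+1) B" "q \<in> \<pi>" "q \<noteq> B" | "q = insert (n+1) B" "p \<in> \<pi>" "p \<noteq> B"
          | "p \<in> \<pi>" "q \<in> \<pi>" unfolding Pj_def by auto
        then show "disjnt p q"
        proof cases
          case 1 then show ?thesis using D2[OF 1(2,3)] 1(1) by (simp add: disjnt_def)
        next
          case 2 then show ?thesis using D2[OF 2(2,3)] 2(1) by (simp add: disjnt_def Int_commute)
        next
          case 3 then show ?thesis using D pq(3) by (simp add: disjnt_def)
        qed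
      qed
      interpret pj: part "{1..n+1}" Pj using Pj_po by unfold_locales simp
      have MPj: "Min ` Pj = Min ` \<pi>" unfolding Pj_def using MinB B by auto
      have Pj_z: "zlab Pj i = zlab \<pi> i" if i: "i \<in> {1..n}" for i
      proof -
        have "Min (block_of Pj i) = Min (block_of \<pi> i)"
        proof (cases "i \<in> B")
          case True
          then show ?thesis using pj.block_eq[of "insert (n+1) B" i] p.block_eq[OF B(1) True] MinB
            by (simp add: Pj_def)
        next
          case False
          then have "block_of \<pi> i \<in> \<pi> - {B}" using p.block_mem[OF i] by auto
          then have "block_of Pj i = block_of \<pi> i"
            using p.block_mem[OF i] by (intro pj.block_eq) (auto simp: Pj_def)
          then show ?thesis by simp
        qed
        then show ?thesis using pj.zlab_rk p.zlab_rk MPj by simp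
      qed
      have Pj_zn: "zlab Pj (n+1) = j"
      proof -
        have "block_of Pj (n+1) = insert (n+1) B" by (rule pj.block_eq) (auto simp: Pj_def)
        then show ?thesis using pj.zlab_rk MPj MinB B by simp
      qed
      have Pj_in: "Pj \<in> set_partitions (n+1) \<inter> C"
        using Pj_po Pj_z by (auto simp: set_partitions_def C_def)
      have notin: "insert (n+1) B \<notin> \<pi> - {B}" using nb by auto
      have Pj_card: "card Pj = k" unfolding Pj_def k_def
        using notin p.finP B k_ge k_def by (simp add: card_Diff_singleton)
      have cB: "card (insert (n+1) B) = card B + 1" using Bne nb B by simp
      have Pj_g: "gibbs V W (n+1) Pj = V (n+1) k * (W (card B + 1) * (\<Prod>B'\<in>\<pi>-{B}. W (card B')))"
        unfolding gibbs_def Pj_card unfolding Pj_def using notin p.finP cB by simp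
      have PPB: "PP = W (card B) * (\<Prod>B'\<in>\<pi>-{B}. W (card B'))"
        unfolding PP_def using p.finP B(1) by (rule prod.remove)
      have WB: "0 < W (card B)" using W_pos Bne by (simp add: Suc_le_eq card_gt_0_iff)
      show ?thesis using cond[OF Pj_in Pj_zn] Pj_g True Bset PPB WB Gpos
        unfolding c_def by (simp add: field_simps)
    qed
  qed
qed


theorem corollary3p3:
  fixes V :: "nat \<Rightarrow> nat \<Rightarrow> real" and W :: "nat \<Rightarrow> real"
  assumes V_nonneg: "\<forall>n k. 0 \<le> V n k"
    and W_nonneg: "\<forall>s. 0 \<le> W s"
    and V11: "V 1 1 = 1" and W1: "W 1 = 1"
    and V_pos: "\<forall>n k. 1 \<le> k \<and> k \<le> n \<longrightarrow> 0 < V n k"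
    and W_pos: "\<forall>s. 1 \<le> s \<longrightarrow> 0 < W s"
    and prob: "\<forall>n\<ge>1. gibbs_prob V W n UNIV = 1"
  defines "f \<equiv> (\<lambda>m. W (m + 1) / W m)"
    and "g \<equiv> (\<lambda>n k. V (n + 1) (k + 1) / V (n + 1) k)"
  shows
    "(\<forall>n\<ge>1. \<forall>\<pi>\<in>set_partitions n.
        let k = card \<pi>;
            nj = (\<lambda>j. card {i\<in>{1..n}. zlab \<pi> i = j});
            C = {P. \<forall>i\<in>{1..n}. zlab P i = zlab \<pi> i}
        in \<exists>c>0. \<forall>j\<in>{1..k+1}.
             gibbs_cond V W (n + 1) {P. zlab P (n + 1) = j} C
               = c * (if j \<le> k then f (nj j) else g n k))
     \<and> ((\<forall>m\<ge>1. f m \<le> f (m + 1)) \<longleftrightarrow> (\<forall>n\<ge>1. balance_averse (gibbs_eppf V W) n))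
     \<and> ((\<forall>m\<ge>1. f (m + 1) \<le> f m) \<longleftrightarrow> (\<forall>n\<ge>1. balance_seeking (gibbs_eppf V W) n))"
  proof -
  have Wp: "\<And>s. 1 \<le> s \<Longrightarrow> 0 < W s" using W_pos by auto
  show ?thesis
  proof (intro conjI)
  show "\<forall>n\<ge>1. \<forall>\<pi>\<in>set_partitions n.
        let k = card \<pi>;
            nj = (\<lambda>j. card {i\<in>{1..n}. zlab \<pi> i = j});
            C = {P. \<forall>i\<in>{1..n}. zlab P i = zlab \<pi> i}
        in \<exists>c>0. \<forall>j\<in>{1..k+1}.
             gibbs_cond V W (n + 1) {P. zlab P (n + 1) = j} C
               = c * (if j \<le> k then f (nj j) else g n k)"
    unfolding Let_def f_def g_def
    by (intro allI impI ballI cond_part[OF V_nonneg W_nonneg W1 V_pos W_pos])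
  show "(\<forall>m\<ge>1. f m \<le> f (m + 1)) \<longleftrightarrow> (\<forall>n\<ge>1. balance_averse (gibbs_eppf V W) n)"
    unfolding f_def
    using averse_dir[of V W, OF V_nonneg Wp] averse_conv[of V W, OF V_pos Wp] by blast
  show "(\<forall>m\<ge>1. f (m + 1) \<le> f m) \<longleftrightarrow> (\<forall>n\<ge>1. balance_seeking (gibbs_eppf V W) n)"
    unfolding f_def
    using seeking_dir[of V W, OF V_nonneg Wp] seeking_conv[of V W, OF V_pos Wp] by blast
  qed
qed

end
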